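(* Let $\rho=\sum_{i=0}^n\lambda_i|D_n^i\rangle\langle D_n^i|$ with $\lambda_i\ge0$, $\sum_i\lambda_i=1$. If $n\ge2$, then $\rho_{[2]}$ is PPT if and only if $$\Big[\sum_{i=0}^n(n-i)(n-i-1)\lambda_i\Big]\Big[\sum_{i=0}^n i(i-1)\lambda_i\Big]-\Big[\sum_{i=0}^n i(n-i)\lambda_i\Big]^2\ge0.$$ If $n\ge3$, then $\rho_{[3]}$ is PPT if and only if both $$\Big[\sum_{i=0}^n(n-i)(n-i-1)(n-i-2)\lambda_i\Big]\Big[\sum_{i=0}^n i(i-1)(n-i)\lambda_i\Big]-\Big[\sum_{i=0}^n i(n-i)(n-i-1)\lambda_i\Big]^2\ge0$$ and $$\Big[\sum_{i=0}^n i(n-i)(n-i-1)\lambda_i\Big]\Big[\sum_{i=0}^n i(i-1)(i-2)\lambda_i\Big]-\Big[\sum_{i=0}^n i(i-1)(n-i)\lambda_i\Big]^2\ge0.$$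
   Context: $\rho_{[k]}$ denotes the partial trace of $\rho$ over qubits $k+1,\dots,n$. Dicke states: $|D_n^i\rangle=\binom{n}{i}^{-1/2}\sum_{s\in\{0,1\}^n,\ \sum_js_j=i}|s_1\rangle\otimes\cdots\otimes|s_n\rangle$. An $m$-qubit state whose range lies in the subspace of vectors invariant under swapping any two qubits (a symmetric state) is called PPT if its partial transpose with respect to $\lfloor m/2\rfloor$ of its qubits is positive semidefinite. *)

theory Defs
  imports Complex_Main
begin

text \<open>Computational basis of m qubits: bit strings of length m (True = |1>).
  Operators on m qubits are functions on pairs of bit strings (matrix entries).\<close>

definition bits :: "nat \<Rightarrow> bool list set" where
  "bits m = {s. length s = m}"

definition dicke :: "nat \<Rightarrow> nat \<Rightarrow> bool list \<Rightarrow> complex" where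
  "dicke n i s = (if length s = n \<and> length (filter id s) = i
                  then complex_of_real (1 / sqrt (real (n choose i))) else 0)"

definition dicke_mixture :: "nat \<Rightarrow> (nat \<Rightarrow> real) \<Rightarrow> bool list \<Rightarrow> bool list \<Rightarrow> complex" where
  "dicke_mixture n lam s t = (\<Sum>i = 0..n. complex_of_real (lam i) * dicke n i s * cnj (dicke n i t))"

definition ptrace :: "nat \<Rightarrow> nat \<Rightarrow> (bool list \<Rightarrow> bool list \<Rightarrow> complex) \<Rightarrow> bool list \<Rightarrow> bool list \<Rightarrow> complex" where
  "ptrace n k \<rho> s t = (\<Sum>u \<in> bits (n - k). \<rho> (s @ u) (t @ u))"

text \<open>Partial transpose with respect to the first j qubits.\<close>
definition ptranspose :: "nat \<Rightarrow> (bool list \<Rightarrow> bool list \<Rightarrow> complex) \<Rightarrow> bool list \<Rightarrow> bool list \<Rightarrow> complex" where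
  "ptranspose j \<sigma> s t = \<sigma> (take j t @ drop j s) (take j s @ drop j t)"

definition psd :: "nat \<Rightarrow> (bool list \<Rightarrow> bool list \<Rightarrow> complex) \<Rightarrow> bool" where
  "psd m M \<longleftrightarrow> (\<forall>v :: bool list \<Rightarrow> complex.
     let q = (\<Sum>s \<in> bits m. \<Sum>t \<in> bits m. cnj (v s) * M s t * v t) in Im q = 0 \<and> Re q \<ge> 0)"

text \<open>PPT for (symmetric) m-qubit states: partial transpose w.r.t. floor(m/2) qubits is PSD.\<close>
definition PPT :: "nat \<Rightarrow> (bool list \<Rightarrow> bool list \<Rightarrow> complex) \<Rightarrow> bool" where
  "PPT m \<sigma> \<longleftrightarrow> psd m (ptranspose (m div 2) \<sigma>)"

end

theory Submission
  imports Defs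
begin


definition W :: "bool list \<Rightarrow> nat" where "W s = length (filter id s)"
lemma W_simps[simp]: "W [] = 0" "W (b # s) = (if b then Suc (W s) else W s)" "W (s @ t) = W s + W t"
  by (auto simp: W_def)

lemma finite_bits[simp]: "finite (bits m)"
proof -
  have "bits m \<subseteq> {xs. set xs \<subseteq> UNIV \<and> length xs = m}" by (auto simp: bits_def)
  moreover have "finite {xs. set xs \<subseteq> (UNIV::bool set) \<and> length xs = m}"
    by (rule finite_lists_length_eq) simp
  ultimately show ?thesis by (rule finite_subset)
qed

lemma card_bits_weight: "card {u \<in> bits m. W u = j} = m choose j"
proof (induction m arbitrary: j)
  case 0
  have "{u \<in> bits 0. W u = j} = (if j = 0 then {[]} else {})" by (auto simp: bits_def)
  then show ?case by simp
next
  case (Suc m)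
  have eq: "{u \<in> bits (Suc m). W u = j} =
     (Cons True) ` {u \<in> bits m. W u = j - 1 \<and> j \<ge> 1} \<union> (Cons False) ` {u \<in> bits m. W u = j}"
    by (auto simp: bits_def length_Suc_conv image_iff split: if_splits)
  have fin: "finite {u \<in> bits m. W u = j - 1 \<and> j \<ge> 1}" "finite {u \<in> bits m. W u = j}" by auto
  have "card {u \<in> bits (Suc m). W u = j} = card {u \<in> bits m. W u = j - 1 \<and> j \<ge> 1} + card {u \<in> bits m. W u = j}"
    unfolding eq
    by (subst card_Un_disjoint) (auto simp: card_image fin)
  also have "card {u \<in> bits m. W u = j - 1 \<and> j \<ge> 1} = (if j \<ge> 1 then m choose (j - 1) else 0)"
    using Suc.IH[of "j - 1"] by auto
  finally show ?case using Suc.IH[of j] by (cases j) auto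
qed

definition acoef :: "nat \<Rightarrow> nat \<Rightarrow> (nat \<Rightarrow> real) \<Rightarrow> nat \<Rightarrow> real" where
  "acoef n k lam w = (\<Sum>i = 0..n. lam i * (if w \<le> i then real ((n - k) choose (i - w)) else 0) / real (n choose i))"

lemma card_bits_shift: "card {u \<in> bits m. w + W u = i} = (if w \<le> i then m choose (i - w) else 0)"
proof (cases "w \<le> i")
  case True
  then have "{u \<in> bits m. w + W u = i} = {u \<in> bits m. W u = i - w}" by auto
  then show ?thesis using True card_bits_weight by simp
next
  case False
  then have "{u \<in> bits m. w + W u = i} = {}" by auto
  then show ?thesis using False by simp
qed

lemma ptrace_dicke:
  assumes "k \<le> n" "length s = k" "length t = k"
  shows "ptrace n k (dicke_mixture n lam) s t = (if W s = W t then complex_of_real (acoef n k lam (W s)) else 0)"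
proof -
  have dk: "dicke n i (x @ u) = (if W x + W u = i then complex_of_real (1 / sqrt (real (n choose i))) else 0)"
    if "u \<in> bits (n - k)" "length x = k" for u i x
    using that assms by (simp add: dicke_def bits_def W_def)
  have pr: "complex_of_real (1 / sqrt c) * cnj (complex_of_real (1 / sqrt c)) = complex_of_real (1 / c)" if "c \<ge> 0" for c :: real
    using that by (simp flip: of_real_mult)
  have sq: "complex_of_real (sqrt (real m)) * complex_of_real (sqrt (real m)) = of_nat m" for m
    by (simp flip: of_real_mult)
  have "ptrace n k (dicke_mixture n lam) s t =
     (\<Sum>u \<in> bits (n - k). \<Sum>i = 0..n. complex_of_real (lam i) *
        (if W s + W u = i \<and> W t + W u = i then complex_of_real (1 / real (n choose i)) else 0))"
    unfolding ptrace_def dicke_mixture_def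
    by (intro sum.cong refl) (auto simp: dk assms pr sq)
  also have "\<dots> = (if W s = W t then complex_of_real (acoef n k lam (W s)) else 0)"
  proof (cases "W s = W t")
    case False
    then show ?thesis by (intro trans[OF sum.neutral] ) (auto intro!: sum.neutral)
  next
    case True
    have "(\<Sum>u \<in> bits (n - k). \<Sum>i = 0..n. complex_of_real (lam i) *
        (if W s + W u = i \<and> W t + W u = i then complex_of_real (1 / real (n choose i)) else 0))
      = (\<Sum>i = 0..n. \<Sum>u \<in> bits (n - k). (if W s + W u = i then complex_of_real (lam i / real (n choose i)) else 0))"
      using True by (subst sum.swap) (auto intro!: sum.cong)
    also have "\<dots> = (\<Sum>i = 0..n. of_nat (card {u \<in> bits (n - k). W s + W u = i}) * complex_of_real (lam i / real (n choose i)))"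
      by (intro sum.cong refl) (simp add: sum.If_cases Int_def conj_commute)
    also have "\<dots> = complex_of_real (acoef n k lam (W s))"
      unfolding acoef_def card_bits_shift of_real_sum
      by (intro sum.cong refl) auto
    finally show ?thesis using True by simp
  qed
  finally show ?thesis .
qed



lemma bits2: "bits 2 = {[False,False],[False,True],[True,False],[True,True]}"
  by (auto simp: bits_def length_Suc_conv numeral_2_eq_2)

lemma bits3: "bits 3 = {[False,False,False],[False,False,True],[False,True,False],[False,True,True],
   [True,False,False],[True,False,True],[True,True,False],[True,True,True]}"
  by (auto simp: bits_def length_Suc_conv numeral_3_eq_3)

lemma real_qf_nonneg:
  fixes A B C X Y :: real
  assumes "A \<ge> 0" "C \<ge> 0" "B^2 \<le> A * C"
  shows "A * X^2 + 2 * B * X * Y + C * Y^2 \<ge> 0"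
proof (cases "A = 0")
  case True
  then have "B^2 \<le> 0" using assms by simp
  then have "B = 0" by (smt (verit) zero_le_power2 power_eq_0_iff zero_less_numeral)
  then show ?thesis using True assms by simp
next
  case False
  then have Ap: "A > 0" using assms by simp
  have "A * (A * X^2 + 2 * B * X * Y + C * Y^2) = (A * X + B * Y)^2 + (A * C - B^2) * Y^2"
    by (simp add: algebra_simps power2_eq_square)
  also have "\<dots> \<ge> 0" using assms by simp
  finally show ?thesis using Ap by (simp add: zero_le_mult_iff)
qed

lemma real_qf_converse:
  fixes A B C :: real
  assumes h: "\<And>X Y. A * X^2 + 2 * B * X * Y + C * Y^2 \<ge> 0"
  shows "B^2 \<le> A * C"
proof -
  have h1: "A * (A * C - B^2) \<ge> 0" using h[of B "-A"] by (simp add: algebra_simps power2_eq_square)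
  have h2: "C * (A * C - B^2) \<ge> 0" using h[of "-C" B] by (simp add: algebra_simps power2_eq_square)
  have hA: "A \<ge> 0" using h[of 1 0] by simp
  have hC: "C \<ge> 0" using h[of 0 1] by simp
  show ?thesis
  proof (cases "A > 0")
    case True then show ?thesis using h1 by (simp add: zero_le_mult_iff)
  next
    case False
    then have A0: "A = 0" using hA by simp
    show ?thesis
    proof (cases "C > 0")
      case True then show ?thesis using h2 by (simp add: zero_le_mult_iff)
    next
      case False
      then have "C = 0" using hC by simp
      then have "- 2 * B^2 \<ge> 0" using h[of 1 "-B"] A0 by (simp add: power2_eq_square)
      then show ?thesis using A0 by simp
    qed
  qed
qed

definition Q :: "real \<Rightarrow> real \<Rightarrow> real \<Rightarrow> complex \<Rightarrow> complex \<Rightarrow> complex" where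
  "Q A B C x w = of_real A * cnj x * x + of_real B * (cnj x * w + cnj w * x) + of_real C * cnj w * w"

lemma Q_props:
  assumes "A \<ge> 0" "C \<ge> 0" "B^2 \<le> A * C"
  shows "Im (Q A B C x w) = 0 \<and> Re (Q A B C x w) \<ge> 0"
proof
  show "Im (Q A B C x w) = 0" by (simp add: Q_def algebra_simps)
  have "Re (Q A B C x w) = (A * (Re x)^2 + 2 * B * Re x * Re w + C * (Re w)^2)
     + (A * (Im x)^2 + 2 * B * Im x * Im w + C * (Im w)^2)"
    by (simp add: Q_def algebra_simps power2_eq_square)
  also have "\<dots> \<ge> 0" by (intro add_nonneg_nonneg real_qf_nonneg assms)
  finally show "Re (Q A B C x w) \<ge> 0" .
qed

lemma Q_real: "Q A B C (of_real X) (of_real Y) = of_real (A * X^2 + 2 * B * X * Y + C * Y^2)"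
  by (simp add: Q_def algebra_simps power2_eq_square)

lemma diag_props: "A \<ge> 0 \<Longrightarrow> Im (of_real A * cnj x * x) = 0 \<and> Re (of_real A * cnj x * x) \<ge> 0"
  by (simp add: algebra_simps)



lemma psd2:
  fixes \<sigma> :: "bool list \<Rightarrow> bool list \<Rightarrow> complex" and a :: "nat \<Rightarrow> real"
  assumes hs: "\<And>s t. length s = 2 \<Longrightarrow> length t = 2 \<Longrightarrow> \<sigma> s t = (if W s = W t then complex_of_real (a (W s)) else 0)"
    and a0: "a 0 \<ge> 0" and a1: "a 1 \<ge> 0" and a2: "a 2 \<ge> 0"
  shows "psd 2 (ptranspose 1 \<sigma>) \<longleftrightarrow> (a 1)^2 \<le> a 0 * a 2"
proof -
  have qf: "(\<Sum>s \<in> bits 2. \<Sum>t \<in> bits 2. cnj (v s) * ptranspose 1 \<sigma> s t * v t) =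
     Q (a 0) (a 1) (a 2) (v [False,False]) (v [True,True])
     + of_real (a 1) * cnj (v [False,True]) * v [False,True]
     + of_real (a 1) * cnj (v [True,False]) * v [True,False]" for v
    unfolding bits2 by (simp add: ptranspose_def hs Q_def algebra_simps numeral_2_eq_2)
  show ?thesis
  proof
    assume "psd 2 (ptranspose 1 \<sigma>)"
    then have h: "Re (\<Sum>s \<in> bits 2. \<Sum>t \<in> bits 2. cnj (v s) * ptranspose 1 \<sigma> s t * v t) \<ge> 0" for v
      unfolding psd_def Let_def by blast
    show "(a 1)^2 \<le> a 0 * a 2"
    proof (rule real_qf_converse)
      fix X Y :: real
      show "a 0 * X^2 + 2 * a 1 * X * Y + a 2 * Y^2 \<ge> 0"
        using h[of "\<lambda>s. if s = [False,False] then of_real X else if s = [True,True] then of_real Y else 0"]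
        unfolding qf by (simp add: Q_real)
    qed
  next
    assume c: "(a 1)^2 \<le> a 0 * a 2"
    show "psd 2 (ptranspose 1 \<sigma>)"
      unfolding psd_def Let_def qf
      using Q_props[OF a0 a2 c] diag_props[OF a1] by simp
  qed
qed

lemma Q_zero[simp]: "Q A B C 0 0 = 0" by (simp add: Q_def)

lemma psd3:
  fixes \<sigma> :: "bool list \<Rightarrow> bool list \<Rightarrow> complex" and a :: "nat \<Rightarrow> real"
  assumes hs: "\<And>s t. length s = 3 \<Longrightarrow> length t = 3 \<Longrightarrow> \<sigma> s t = (if W s = W t then complex_of_real (a (W s)) else 0)"
    and a0: "a 0 \<ge> 0" and a1: "a 1 \<ge> 0" and a2: "a 2 \<ge> 0" and a3: "a 3 \<ge> 0"
  shows "psd 3 (ptranspose 1 \<sigma>) \<longleftrightarrow> (a 1)^2 \<le> a 0 * a 2 \<and> (a 2)^2 \<le> a 1 * a 3"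
proof -
  have qf: "(\<Sum>s \<in> bits 3. \<Sum>t \<in> bits 3. cnj (v s) * ptranspose 1 \<sigma> s t * v t) =
     Q (a 0) (a 1) (a 2) (v [False,False,False]) (v [True,False,True] + v [True,True,False])
     + Q (a 1) (a 2) (a 3) (v [False,False,True] + v [False,True,False]) (v [True,True,True])
     + of_real (a 1) * cnj (v [True,False,False]) * v [True,False,False]
     + of_real (a 2) * cnj (v [False,True,True]) * v [False,True,True]" for v
    unfolding bits3 by (simp add: ptranspose_def hs Q_def algebra_simps numeral_2_eq_2 numeral_3_eq_3)
  show ?thesis
  proof
    assume "psd 3 (ptranspose 1 \<sigma>)"
    then have h: "Re (\<Sum>s \<in> bits 3. \<Sum>t \<in> bits 3. cnj (v s) * ptranspose 1 \<sigma> s t * v t) \<ge> 0" for v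
      unfolding psd_def Let_def by blast
    have "(a 1)^2 \<le> a 0 * a 2"
    proof (rule real_qf_converse)
      fix X Y :: real
      show "a 0 * X^2 + 2 * a 1 * X * Y + a 2 * Y^2 \<ge> 0"
        using h[of "\<lambda>s. if s = [False,False,False] then of_real X else if s = [True,False,True] then of_real Y else 0"]
        unfolding qf by (simp add: Q_real)
    qed
    moreover have "(a 2)^2 \<le> a 1 * a 3"
    proof (rule real_qf_converse)
      fix X Y :: real
      show "a 1 * X^2 + 2 * a 2 * X * Y + a 3 * Y^2 \<ge> 0"
        using h[of "\<lambda>s. if s = [False,False,True] then of_real X else if s = [True,True,True] then of_real Y else 0"]
        unfolding qf by (simp add: Q_real)
    qed
    ultimately show "(a 1)^2 \<le> a 0 * a 2 \<and> (a 2)^2 \<le> a 1 * a 3" ..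
  next
    assume c: "(a 1)^2 \<le> a 0 * a 2 \<and> (a 2)^2 \<le> a 1 * a 3"
    show "psd 3 (ptranspose 1 \<sigma>)"
      unfolding psd_def Let_def qf
      using Q_props[OF a0 a2, of "a 1"] Q_props[OF a1 a3, of "a 2"] c diag_props[OF a1] diag_props[OF a2] by simp
  qed
qed



fun ff :: "real \<Rightarrow> nat \<Rightarrow> real" where
  "ff x 0 = 1"
| "ff x (Suc k) = x * ff (x - 1) k"

lemma R1: "1 \<le> i \<Longrightarrow> real i * real (n choose i) = real n * real ((n - 1) choose (i - 1))"
proof -
  assume "1 \<le> i"
  then obtain j where i: "i = Suc j" by (cases i) auto
  show ?thesis
  proof (cases n)
    case 0 then show ?thesis using i by simp
  next
    case (Suc m)
    have eq: "real (Suc j) * real (Suc m choose Suc j) = real (Suc m) * real (m choose j)"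
      by (metis of_nat_mult Suc_times_binomial)
    show ?thesis unfolding i Suc diff_Suc_1 by (rule eq)
  qed
qed

lemma R2: "(real n - real i) * real (n choose i) = real n * real ((n - 1) choose i)"
proof (cases "i \<le> n")
  case True
  have "(n - i) * (n choose i) = n * ((n - 1) choose i)" by (rule binomial_absorb_comp)
  then have "real ((n - i) * (n choose i)) = real (n * ((n - 1) choose i))" by simp
  then show ?thesis using True by (simp only: of_nat_mult of_nat_diff)
next
  case False
  then show ?thesis by (simp add: binomial_eq_0)
qed

lemma ff_zero: "i < w \<Longrightarrow> ff (real i) w = 0"
proof (induction w arbitrary: i)
  case 0 then show ?case by simp
next
  case (Suc w)
  show ?case
  proof (cases i)
    case 0 then show ?thesis by simp
  next
    case (Suc j)
    then have "ff (real j) w = 0" using Suc.prems Suc.IH by simp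
    then show ?thesis using Suc by simp
  qed
qed

lemma ff_pos: "k \<le> n \<Longrightarrow> ff (real n) k > 0"
proof (induction k arbitrary: n)
  case 0 then show ?case by simp
next
  case (Suc k)
  have "ff (real n - 1) k > 0" using Suc.IH[of "n - 1"] Suc.prems by (simp add: of_nat_diff)
  then show ?case using Suc.prems by simp
qed

lemma G0: "k \<le> n \<Longrightarrow> ff (real n - real i) k * real (n choose i) = ff (real n) k * real ((n - k) choose i)"
proof (induction k arbitrary: n)
  case 0 then show ?case by simp
next
  case (Suc k)
  have n1: "real (n - 1) = real n - 1" using Suc.prems by (simp add: of_nat_diff)
  have IH: "ff (real (n - 1) - real i) k * real ((n - 1) choose i) = ff (real (n - 1)) k * real ((n - 1 - k) choose i)"
    using Suc.prems by (intro Suc.IH) simp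
  have "ff (real n - real i) (Suc k) * real (n choose i) = ff (real n - real i - 1) k * ((real n - real i) * real (n choose i))"
    by simp
  also have "\<dots> = real n * (ff (real (n - 1) - real i) k * real ((n - 1) choose i))"
    unfolding R2 n1 by (simp add: algebra_simps)
  also have "\<dots> = real n * ff (real (n - 1)) k * real ((n - 1 - k) choose i)" unfolding IH by simp
  also have "\<dots> = ff (real n) (Suc k) * real ((n - Suc k) choose i)" unfolding n1 by simp
  finally show ?case .
qed

lemma G: "w \<le> i \<Longrightarrow> w \<le> k \<Longrightarrow> k \<le> n \<Longrightarrow>
  ff (real i) w * ff (real n - real i) (k - w) * real (n choose i) = ff (real n) k * real ((n - k) choose (i - w))"
proof (induction w arbitrary: n i k)
  case 0 then show ?case using G0 by simp
next
  case (Suc w)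
  have n1: "real (n - 1) = real n - 1" using Suc.prems by (simp add: of_nat_diff)
  have i1: "real (i - 1) = real i - 1" using Suc.prems by (simp add: of_nat_diff)
  have IH: "ff (real (i - 1)) w * ff (real (n - 1) - real (i - 1)) (k - 1 - w) * real ((n - 1) choose (i - 1))
      = ff (real (n - 1)) (k - 1) * real ((n - 1 - (k - 1)) choose (i - 1 - w))"
    using Suc.prems by (intro Suc.IH) auto
  have k1: "k - Suc w = k - 1 - w" by simp
  have kk: "k = Suc (k - 1)" using Suc.prems by simp
  have ffk: "ff (real n) k = real n * ff (real (n - 1)) (k - 1)"
    by (subst kk) (simp only: ff.simps n1 diff_Suc_1)
  have e1: "n - 1 - (k - 1) = n - k" "i - 1 - w = i - Suc w" using Suc.prems by auto
  have "ff (real i) (Suc w) * ff (real n - real i) (k - Suc w) * real (n choose i)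
      = ff (real i - 1) w * ff (real n - real i) (k - 1 - w) * (real i * real (n choose i))"
    unfolding k1 by simp
  also have "\<dots> = real n * (ff (real (i - 1)) w * ff (real (n - 1) - real (i - 1)) (k - 1 - w) * real ((n - 1) choose (i - 1)))"
    using Suc.prems by (subst R1) (auto simp: n1 i1)
  also have "\<dots> = real n * ff (real (n - 1)) (k - 1) * real ((n - k) choose (i - Suc w))"
    unfolding IH e1 by simp
  also have "\<dots> = ff (real n) k * real ((n - k) choose (i - Suc w))"
    unfolding ffk by (rule refl)
  finally show ?case .
qed

lemma acoef_eq:
  assumes "w \<le> k" "k \<le> n"
  shows "acoef n k lam w = (\<Sum>i = 0..n. ff (real i) w * ff (real n - real i) (k - w) * lam i) / ff (real n) k"
  unfolding acoef_def sum_divide_distrib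
proof (intro sum.cong refl)
  fix i assume "i \<in> {0..n}"
  then have "i \<le> n" by simp
  then have cpos: "real (n choose i) > 0" by simp
  have fpos: "ff (real n) k > 0" using ff_pos assms by simp
  show "lam i * (if w \<le> i then real ((n - k) choose (i - w)) else 0) / real (n choose i) =
        ff (real i) w * ff (real n - real i) (k - w) * lam i / ff (real n) k"
  proof (cases "w \<le> i")
    case True
    have "real ((n - k) choose (i - w)) = ff (real i) w * ff (real n - real i) (k - w) * real (n choose i) / ff (real n) k"
      using G[OF True assms] fpos by (simp add: field_simps)
    then show ?thesis using True cpos fpos by (simp add: field_simps)
  next
    case False
    then show ?thesis using ff_zero[of i w] by simp
  qed
qed

lemma acoef_nonneg: "(\<And>i. i \<le> n \<Longrightarrow> lam i \<ge> 0) \<Longrightarrow> acoef n k lam w \<ge> 0"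
  unfolding acoef_def by (intro sum_nonneg) auto



lemma scale_cond:
  fixes x y z F :: real
  assumes "F > 0"
  shows "(y / F)^2 \<le> (x / F) * (z / F) \<longleftrightarrow> x * z - y^2 \<ge> 0"
proof -
  have h1: "(y / F)^2 = y^2 / F^2" by (simp add: power_divide)
  have h2: "(x / F) * (z / F) = (x * z) / F^2" by (simp add: power2_eq_square)
  have "F^2 > 0" using assms by simp
  then show ?thesis unfolding h1 h2 divide_le_cancel by auto
qed

theorem mainTheorem14:
  fixes n :: nat and lam :: "nat \<Rightarrow> real"
  assumes nonneg: "\<And>i. i \<le> n \<Longrightarrow> lam i \<ge> 0"
    and sum1: "(\<Sum>i = 0..n. lam i) = 1"
  shows "(n \<ge> 2 \<longrightarrow>
           (PPT 2 (ptrace n 2 (dicke_mixture n lam)) \<longleftrightarrow>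
             (\<Sum>i = 0..n. (real n - real i) * (real n - real i - 1) * lam i)
             * (\<Sum>i = 0..n. real i * (real i - 1) * lam i)
             - (\<Sum>i = 0..n. real i * (real n - real i) * lam i)^2 \<ge> 0))
       \<and> (n \<ge> 3 \<longrightarrow>
           (PPT 3 (ptrace n 3 (dicke_mixture n lam)) \<longleftrightarrow>
             ((\<Sum>i = 0..n. (real n - real i) * (real n - real i - 1) * (real n - real i - 2) * lam i)
              * (\<Sum>i = 0..n. real i * (real i - 1) * (real n - real i) * lam i)
              - (\<Sum>i = 0..n. real i * (real n - real i) * (real n - real i - 1) * lam i)^2 \<ge> 0
             \<and> (\<Sum>i = 0..n. real i * (real n - real i) * (real n - real i - 1) * lam i)
              * (\<Sum>i = 0..n. real i * (real i - 1) * (real i - 2) * lam i)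
              - (\<Sum>i = 0..n. real i * (real i - 1) * (real n - real i) * lam i)^2 \<ge> 0)))"
proof (intro conjI impI)
  have d2: "(2::nat) div 2 = 1" by simp
  assume n2: "n \<ge> 2"
  define a where "a = acoef n 2 lam"
  define F where "F = ff (real n) 2"
  note NN = n2
  have ann: "a w \<ge> 0" for w unfolding a_def by (rule acoef_nonneg[OF nonneg])
  have Fp: "F > 0" unfolding F_def using ff_pos n2 by simp
  have hs: "ptrace n 2 (dicke_mixture n lam) s t = (if W s = W t then complex_of_real (a (W s)) else 0)"
    if "length s = 2" "length t = 2" for s t
    unfolding a_def using ptrace_dicke[OF n2 that] .
  have e0: "a 0 = (\<Sum>i = 0..n. (real n - real i) * (real n - real i - 1) * lam i) / F"
    unfolding a_def F_def
    apply (subst acoef_eq[OF _ NN], simp)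
    apply (intro arg_cong2[where f="(/)"] sum.cong refl)
    apply (simp_all add: eval_nat_numeral algebra_simps)
    done
  have e1: "a 1 = (\<Sum>i = 0..n. real i * (real n - real i) * lam i) / F"
    unfolding a_def F_def
    apply (subst acoef_eq[OF _ NN], simp)
    apply (intro arg_cong2[where f="(/)"] sum.cong refl)
    apply (simp_all add: eval_nat_numeral algebra_simps)
    done
  have e2: "a 2 = (\<Sum>i = 0..n. real i * (real i - 1) * lam i) / F"
    unfolding a_def F_def
    apply (subst acoef_eq[OF _ NN], simp)
    apply (intro arg_cong2[where f="(/)"] sum.cong refl)
    apply (simp_all add: eval_nat_numeral algebra_simps)
    done
  have "PPT 2 (ptrace n 2 (dicke_mixture n lam)) \<longleftrightarrow> (a 1)^2 \<le> a 0 * a 2"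
    unfolding PPT_def d2 by (rule psd2[OF hs ann ann ann])
  then show "PPT 2 (ptrace n 2 (dicke_mixture n lam)) \<longleftrightarrow>
             (\<Sum>i = 0..n. (real n - real i) * (real n - real i - 1) * lam i)
             * (\<Sum>i = 0..n. real i * (real i - 1) * lam i)
             - (\<Sum>i = 0..n. real i * (real n - real i) * lam i)^2 \<ge> 0"
    unfolding e0 e1 e2 scale_cond[OF Fp] .
next
  assume n3: "n \<ge> 3"
  have d3: "(3::nat) div 2 = 1" by simp
  define a where "a = acoef n 3 lam"
  define F where "F = ff (real n) 3"
  note NN = n3
  have ann: "a w \<ge> 0" for w unfolding a_def by (rule acoef_nonneg[OF nonneg])
  have Fp: "F > 0" unfolding F_def using ff_pos n3 by simp
  have hs: "ptrace n 3 (dicke_mixture n lam) s t = (if W s = W t then complex_of_real (a (W s)) else 0)"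
    if "length s = 3" "length t = 3" for s t
    unfolding a_def using ptrace_dicke[OF n3 that] .
  have e0: "a 0 = (\<Sum>i = 0..n. (real n - real i) * (real n - real i - 1) * (real n - real i - 2) * lam i) / F"
    unfolding a_def F_def
    apply (subst acoef_eq[OF _ NN], simp)
    apply (intro arg_cong2[where f="(/)"] sum.cong refl)
    apply (simp_all add: eval_nat_numeral algebra_simps)
    done
  have e1: "a 1 = (\<Sum>i = 0..n. real i * (real n - real i) * (real n - real i - 1) * lam i) / F"
    unfolding a_def F_def
    apply (subst acoef_eq[OF _ NN], simp)
    apply (intro arg_cong2[where f="(/)"] sum.cong refl)
    apply (simp_all add: eval_nat_numeral algebra_simps)
    done
  have e2: "a 2 = (\<Sum>i = 0..n. real i * (real i - 1) * (real n - real i) * lam i) / F"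
    unfolding a_def F_def
    apply (subst acoef_eq[OF _ NN], simp)
    apply (intro arg_cong2[where f="(/)"] sum.cong refl)
    apply (simp_all add: eval_nat_numeral algebra_simps)
    done
  have e3: "a 3 = (\<Sum>i = 0..n. real i * (real i - 1) * (real i - 2) * lam i) / F"
    unfolding a_def F_def
    apply (subst acoef_eq[OF _ NN], simp)
    apply (intro arg_cong2[where f="(/)"] sum.cong refl)
    apply (simp_all add: eval_nat_numeral algebra_simps)
    done
  have "PPT 3 (ptrace n 3 (dicke_mixture n lam)) \<longleftrightarrow> (a 1)^2 \<le> a 0 * a 2 \<and> (a 2)^2 \<le> a 1 * a 3"
    unfolding PPT_def d3 by (rule psd3[OF hs ann ann ann ann])
  then show "PPT 3 (ptrace n 3 (dicke_mixture n lam)) \<longleftrightarrow>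
             ((\<Sum>i = 0..n. (real n - real i) * (real n - real i - 1) * (real n - real i - 2) * lam i)
              * (\<Sum>i = 0..n. real i * (real i - 1) * (real n - real i) * lam i)
              - (\<Sum>i = 0..n. real i * (real n - real i) * (real n - real i - 1) * lam i)^2 \<ge> 0
             \<and> (\<Sum>i = 0..n. real i * (real n - real i) * (real n - real i - 1) * lam i)
              * (\<Sum>i = 0..n. real i * (real i - 1) * (real i - 2) * lam i)
              - (\<Sum>i = 0..n. real i * (real i - 1) * (real n - real i) * lam i)^2 \<ge> 0)"
    unfolding e0 e1 e2 e3 scale_cond[OF Fp] .
qed

end
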